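(* Let $q\ge2$, $n\ge2$, $m=n-1$, $R\in[m]$ and $r\equiv m\pmod R$ with $0\le r<R$. Then $$\max_{{\boldsymbol y}\in\Sigma_{q,R}^m}\mathsf{H}^{\mathsf{In}}_{1\text{-}\mathsf{Del}}({\boldsymbol y})=\log_2(nq)-\frac{r}{nq}\left(\left\lceil\tfrac mR\right\rceil+1\right)\log_2\!\left(\left\lceil\tfrac mR\right\rceil+1\right)-\frac{R-r}{nq}\left(\left\lfloor\tfrac mR\right\rfloor+1\right)\log_2\!\left(\left\lfloor\tfrac mR\right\rfloor+1\right),$$ and the maximum is attained only by balanced channel outputs.
   Context: $\Sigma_q=\{0,\dots,q-1\}$. For sequences ${\boldsymbol x}$ of length $N$ and ${\boldsymbol y}$ of length $\ell\le N$, $\omega_{{\boldsymbol y}}({\boldsymbol x})$ is the number of index tuples $1\le i_1<\dots<i_\ell\le N$ with $x_{i_j}=y_j$. The $1$-deletion channel with input length $n$ maps ${\boldsymbol x}\in\Sigma_q^n$ to ${\boldsymbol y}\in\Sigma_q^{n-1}$ with probability $\omega_{{\boldsymbol y}}({\boldsymbol x})/n$; under uniform transmission ($X$ uniform on $\Sigma_q^n$), $\mathsf{H}^{\mathsf{In}}_{1\text{-}\mathsf{Del}}({\boldsymbol y})=H(X\mid Y={\boldsymbol y})$ in bits, with posterior $P({\boldsymbol x}\mid {\boldsymbol y})=\Pr\{{\boldsymbol y}\mid{\boldsymbol x}\}/\sum_{{\boldsymbol x}'}\Pr\{{\boldsymbol y}\mid{\boldsymbol x}'\}$. A run is a maximal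 block of identical consecutive symbols; $\Sigma_{q,R}^m$ is the set of sequences in $\Sigma_q^m$ with exactly $R$ runs. A sequence in $\Sigma_{q,R}^m$ is balanced if it has $r$ runs of length $\lceil m/R\rceil$ and $R-r$ runs of length $\lfloor m/R\rfloor$, where $r\equiv m \pmod R$. *)

theory Defs
  imports Complex_Main "HOL-Library.Multiset"
begin

definition seqs :: "nat \<Rightarrow> nat \<Rightarrow> nat list set" where
  "seqs q N = {x. length x = N \<and> set x \<subseteq> {..<q}}"

definition omega :: "nat list \<Rightarrow> nat list \<Rightarrow> nat" where
  "omega y x = card {I. I \<subseteq> {..<length x} \<and> card I = length y \<and> nths x I = y}"

text \<open>Posterior P(x | y) for the 1-deletion channel with input length n under uniform input:
  Pr(y|x) = omega_y(x)/n, normalised over all inputs x' in Sigma_q^n.\<close>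
definition posterior :: "nat \<Rightarrow> nat \<Rightarrow> nat list \<Rightarrow> nat list \<Rightarrow> real" where
  "posterior q n y x =
     (real (omega y x) / real n) / (\<Sum>x'\<in>seqs q n. real (omega y x') / real n)"

definition H_in_del :: "nat \<Rightarrow> nat \<Rightarrow> nat list \<Rightarrow> real" where
  "H_in_del q n y =
     - (\<Sum>x\<in>seqs q n. let p = posterior q n y x in if p = 0 then 0 else p * log 2 p)"

function run_lengths :: "'a list \<Rightarrow> nat list" where
  "run_lengths [] = []"
| "run_lengths (a # xs) =
     Suc (length (takeWhile (\<lambda>b. b = a) xs)) # run_lengths (dropWhile (\<lambda>b. b = a) xs)"
  by pat_completeness auto
termination
  by (relation "measure length") (auto simp: le_imp_less_Suc length_dropWhile_le)

definition num_runs :: "'a list \<Rightarrow> nat" where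
  "num_runs x = length (run_lengths x)"

definition seqs_runs :: "nat \<Rightarrow> nat \<Rightarrow> nat \<Rightarrow> nat list set" where
  "seqs_runs q R m = {y \<in> seqs q m. num_runs y = R}"

definition balanced :: "nat \<Rightarrow> nat \<Rightarrow> nat list \<Rightarrow> bool" where
  "balanced R m y \<longleftrightarrow>
     mset (run_lengths y) =
       replicate_mset (m mod R) (nat \<lceil>real m / real R\<rceil>) +
       replicate_mset (R - m mod R) (nat \<lfloor>real m / real R\<rfloor>)"

end

theory Submission imports Defs begin

definition ins :: "nat \<Rightarrow> 'a \<Rightarrow> 'a list \<Rightarrow> 'a list" where
  "ins i a y = take i y @ a # drop i y"

definition fib :: "'a list \<Rightarrow> 'a \<Rightarrow> nat \<Rightarrow> nat" where
  "fib y a i = card {j. j \<le> length y \<and> ins j a y = ins i a y}"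

lemma length_ins[simp]: "i \<le> length y \<Longrightarrow> length (ins i a y) = Suc (length y)"
  by (simp add: ins_def)

lemma nth_ins: "i \<le> length y \<Longrightarrow> k \<le> length y \<Longrightarrow>
   ins i a y ! k = (if k < i then y ! k else if k = i then a else y ! (k - 1))"
  by (auto simp: ins_def nth_append min_def nth_Cons' )

lemma ins_eq_lt:
  assumes "i < j" "j \<le> length y"
  shows "ins i a y = ins j a y \<longleftrightarrow> (\<forall>k. i \<le> k \<and> k < j \<longrightarrow> y ! k = a)"
proof
  assume e: "ins i a y = ins j a y"
  have P: "ins i a y ! k = ins j a y ! k" for k using e by simp
  have "y ! (i + d) = a" if "i + d < j" for d
    using that
  proof (induction d)
    case 0
    then show ?case using P[of i] assms by (simp add: nth_ins)
  next
    case (Suc d)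
    then have "y ! (i + d) = a" by simp
    moreover have "ins i a y ! (i + Suc d) = ins j a y ! (i + Suc d)" by (rule P)
    ultimately show ?case using Suc.prems assms by (simp add: nth_ins)
  qed
  then show "\<forall>k. i \<le> k \<and> k < j \<longrightarrow> y ! k = a"
    by (metis le_add_diff_inverse)
next
  assume h: "\<forall>k. i \<le> k \<and> k < j \<longrightarrow> y ! k = a"
  show "ins i a y = ins j a y"
  proof (rule nth_equalityI)
    show "length (ins i a y) = length (ins j a y)" using assms by simp
    fix k assume "k < length (ins i a y)"
    then have k: "k \<le> length y" using assms by simp
    show "ins i a y ! k = ins j a y ! k"
    proof -
      consider "k < i" | "k = i" | "i < k" "k < j" | "k = j" | "j < k" by linarith
      then show ?thesis
      proof cases
        case 3
        have "i \<le> k-1" "k-1 < j" using 3 by auto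
        then have "y ! (k-1) = a" "y ! k = a" using h 3 by auto
        then show ?thesis using 3 assms k by (simp add: nth_ins)
      next
        case 4
        then have "y ! (k-1) = a" using h assms by auto
        then show ?thesis using 4 assms k by (simp add: nth_ins)
      qed (use assms k h in \<open>auto simp: nth_ins\<close>)
    qed
  qed
qed

lemma ins_eq_iff:
  assumes "i \<le> length y" "j \<le> length y"
  shows "ins i a y = ins j a y \<longleftrightarrow> (\<forall>k. min i j \<le> k \<and> k < max i j \<longrightarrow> y ! k = a)"
proof (cases i j rule: linorder_cases)
  case less then show ?thesis using ins_eq_lt[of i j y a] assms by simp
next
  case equal then show ?thesis by auto
next
  case greater then show ?thesis using ins_eq_lt[of j i y a] assms by (auto simp: min_def max_def)
qed

lemma fib_alt: "i \<le> length y \<Longrightarrow>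
  fib y a i = card {j. j \<le> length y \<and> (\<forall>k. min j i \<le> k \<and> k < max j i \<longrightarrow> y ! k = a)}"
  unfolding fib_def by (rule arg_cong[where f=card]) (auto simp: ins_eq_iff)

locale runblk =
  fixes p :: nat and c :: 'a and z :: "'a list"
  assumes p: "1 \<le> p" and hz: "z = [] \<or> hd z \<noteq> c"
begin

definition "yy = replicate p c @ z"

lemma len_yy: "length yy = p + length z" by (simp add: yy_def)

lemma yy_lt: "k < p \<Longrightarrow> yy ! k = c"
  by (simp add: yy_def nth_append)

lemma yy_ge: "p \<le> k \<Longrightarrow> yy ! k = z ! (k - p)"
  by (simp add: yy_def nth_append)

lemma yy_p: "p < length yy \<Longrightarrow> yy ! p \<noteq> c"
  using hz by (auto simp: yy_def nth_append hd_conv_nth)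

lemma z0: "z \<noteq> [] \<Longrightarrow> z ! 0 \<noteq> c"
  using hz by (auto simp: hd_conv_nth)

lemma F1: assumes "i \<le> p" shows "fib yy c i = p + 1"
proof -
  have "{j. j \<le> length yy \<and> (\<forall>k. min j i \<le> k \<and> k < max j i \<longrightarrow> yy ! k = c)} = {..p}"
  proof (intro set_eqI iffI)
    fix j assume j: "j \<in> {j. j \<le> length yy \<and> (\<forall>k. min j i \<le> k \<and> k < max j i \<longrightarrow> yy ! k = c)}"
    show "j \<in> {..p}"
    proof (rule ccontr)
      assume "j \<notin> {..p}"
      then have "p < j" by simp
      then have "min j i \<le> p" "p < max j i" "p < length yy" using assms j by auto
      then show False using j yy_p by auto
    qed
  next
    fix j assume "j \<in> {..p}"
    then show "j \<in> {j. j \<le> length yy \<and> (\<forall>k. min j i \<le> k \<and> k < max j i \<longrightarrow> yy ! k = c)}"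
      using assms p by (auto simp: len_yy yy_lt)
  qed
  then show ?thesis using assms by (simp add: fib_alt len_yy)
qed

lemma F2: assumes "i < p" "a \<noteq> c" shows "fib yy a i = 1"
proof -
  have "{j. j \<le> length yy \<and> (\<forall>k. min j i \<le> k \<and> k < max j i \<longrightarrow> yy ! k = a)} = {i}"
  proof (intro set_eqI iffI)
    fix j assume j: "j \<in> {j. j \<le> length yy \<and> (\<forall>k. min j i \<le> k \<and> k < max j i \<longrightarrow> yy ! k = a)}"
    show "j \<in> {i}"
    proof (rule ccontr)
      assume "j \<notin> {i}"
      then have "min j i < max j i" "min j i < p" using assms by auto
      then have "yy ! (min j i) = a" "yy ! (min j i) = c" using j yy_lt by auto
      then show False using assms by simp
    qed
  next
    fix j assume "j \<in> {i}"
    then show "j \<in> {j. j \<le> length yy \<and> (\<forall>k. min j i \<le> k \<and> k < max j i \<longrightarrow> yy ! k = a)}"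
      using assms by (auto simp: len_yy)
  qed
  then show ?thesis using assms by (simp add: fib_alt len_yy)
qed

lemma F3: assumes "i \<le> length z" "\<not> (a = c \<and> i = 0)" shows "fib yy a (p + i) = fib z a i"
proof -
  let ?Sy = "{j. j \<le> length yy \<and> (\<forall>k. min j (p+i) \<le> k \<and> k < max j (p+i) \<longrightarrow> yy ! k = a)}"
  let ?Sz = "{j. j \<le> length z \<and> (\<forall>k. min j i \<le> k \<and> k < max j i \<longrightarrow> z ! k = a)}"
  have "?Sy = (\<lambda>j. p + j) ` ?Sz"
  proof (intro set_eqI iffI)
    fix j assume j: "j \<in> ?Sy"
    have jp: "p \<le> j"
    proof (rule ccontr)
      assume "\<not> p \<le> j"
      then have jl: "j < p" by simp
      show False
      proof (cases "a = c")
        case True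
        then have "i \<noteq> 0" using assms by simp
        then have "min j (p+i) \<le> p" "p < max j (p+i)" "p < length yy" using jl assms by (auto simp: len_yy)
        then show False using j yy_p True by auto
      next
        case False
        have "min j (p+i) \<le> j" "j < max j (p+i)" using jl by auto
        then have "yy ! j = a" using j by blast
        then show False using yy_lt[OF jl] False by simp
      qed
    qed
    then obtain j' where j': "j = p + j'" using le_Suc_ex by blast
    have "j' \<in> ?Sz"
    proof -
      have "j' \<le> length z" using j j' by (simp add: len_yy)
      moreover have "z ! k = a" if "min j' i \<le> k" "k < max j' i" for k
      proof -
        have "min j (p+i) \<le> p + k" "p + k < max j (p+i)" using that j' by auto
        then have "yy ! (p+k) = a" using j by blast
        then show ?thesis by (simp add: yy_ge)
      qed
      ultimately show ?thesis by blast
    qed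
    then show "j \<in> (\<lambda>j. p + j) ` ?Sz" using j' by blast
  next
    fix j assume "j \<in> (\<lambda>j. p + j) ` ?Sz"
    then obtain j' where j': "j = p + j'" "j' \<in> ?Sz" by blast
    have "yy ! k = a" if "min j (p+i) \<le> k" "k < max j (p+i)" for k
    proof -
      have "p \<le> k" using that j' by auto
      then obtain k' where k': "k = p + k'" using le_Suc_ex by blast
      have "min j' i \<le> k'" "k' < max j' i" using that j' k' by auto
      then have "z ! k' = a" using j' by blast
      then show ?thesis using k' by (simp add: yy_ge)
    qed
    moreover have "j \<le> length yy" using j' by (simp add: len_yy)
    ultimately show "j \<in> ?Sy" by blast
  qed
  moreover have "inj_on (\<lambda>j. p + j) ?Sz" by (simp add: inj_on_def)
  ultimately show ?thesis using assms by (simp add: fib_alt len_yy card_image)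
qed

lemma F4: "fib z c 0 = 1"
proof -
  have "{j. j \<le> length z \<and> (\<forall>k. min j 0 \<le> k \<and> k < max j 0 \<longrightarrow> z ! k = c)} = {0}"
  proof (intro set_eqI iffI)
    fix j assume j: "j \<in> {j. j \<le> length z \<and> (\<forall>k. min j 0 \<le> k \<and> k < max j 0 \<longrightarrow> z ! k = c)}"
    show "j \<in> {0}"
    proof (rule ccontr)
      assume "j \<notin> {0}"
      then have "0 < j" "z \<noteq> []" using j by auto
      then have "z ! 0 = c" using j by auto
      then show False using z0 \<open>z \<noteq> []\<close> by simp
    qed
  qed auto
  then show ?thesis by (simp add: fib_alt)
qed

end


definition T :: "nat \<Rightarrow> nat list \<Rightarrow> real" where
  "T q y = (\<Sum>a<q. \<Sum>i\<le>length y. log 2 (real (fib y a i)))"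

definition phi :: "nat \<Rightarrow> real" where
  "phi k = real (k+1) * log 2 (real (k+1))"

lemma sum_split_atMost:
  fixes f :: "nat \<Rightarrow> 'b::comm_monoid_add" and p n :: nat
  shows "sum f {..p+n} = sum f {..<p} + (\<Sum>i\<le>n. f (p+i))"
  by (induction n) (auto simp: add.assoc simp flip: lessThan_Suc_atMost)

lemma run_decomp:
  "a # xs = replicate (Suc (length (takeWhile (\<lambda>b. b = a) xs))) a @ dropWhile (\<lambda>b. b = a) xs"
proof -
  have "replicate (length (takeWhile (\<lambda>b. b = a) xs)) a = takeWhile (\<lambda>b. b = a) xs"
    by (rule replicate_length_same) (auto dest: set_takeWhileD)
  then show ?thesis by simp
qed

lemma run_hd: "dropWhile (\<lambda>b. b = a) xs = [] \<or> hd (dropWhile (\<lambda>b. b = a) xs) \<noteq> a"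
  using hd_dropWhile[of "\<lambda>b. b = a" xs] by auto

lemma T_step:
  assumes "runblk p c z" "c < q"
  shows "T q (runblk.yy p c z) = phi p + T q z"
proof -
  interpret runblk p c z by fact
  let ?L = "\<lambda>k::nat. log 2 (real k)"
  have A: "(\<Sum>i<p. ?L (fib yy a i)) = real p * (if a = c then ?L (p+1) else 0)" for a
  proof -
    have "(\<Sum>i<p. ?L (fib yy a i)) = (\<Sum>i<p. (if a = c then ?L (p+1) else 0))"
      by (rule sum.cong) (auto simp: F1 F2)
    then show ?thesis by simp
  qed
  have B: "(\<Sum>i\<le>length z. ?L (fib yy a (p+i))) = (\<Sum>i\<le>length z. ?L (fib z a i)) + (if a = c then ?L (p+1) else 0)" for a
  proof -
    have "(\<Sum>i\<le>length z. ?L (fib yy a (p+i))) = (\<Sum>i\<le>length z. ?L (fib z a i) + (if i = 0 then (if a = c then ?L (p+1) else 0) else 0))"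
    proof (rule sum.cong)
      fix i assume "i \<in> {..length z}"
      then show "?L (fib yy a (p+i)) = ?L (fib z a i) + (if i = 0 then (if a = c then ?L (p+1) else 0) else 0)"
        using F1[of p] F3[of i a] F4 by auto
    qed simp
    also have "\<dots> = (\<Sum>i\<le>length z. ?L (fib z a i)) + (if a = c then ?L (p+1) else 0)"
      by (simp add: sum.distrib)
    finally show ?thesis .
  qed
  have "T q yy = (\<Sum>a<q. real p * (if a = c then ?L (p+1) else 0) + ((\<Sum>i\<le>length z. ?L (fib z a i)) + (if a = c then ?L (p+1) else 0)))"
    unfolding T_def len_yy sum_split_atMost A B ..
  also have "\<dots> = real p * ?L (p+1) + T q z + ?L (p+1)"
  proof -
    have e1: "(\<Sum>a<q. (if a = c then ?L (p+1) else 0)) = ?L (p+1)" using assms(2) by simp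
    have e2: "(\<Sum>a<q. real p * (if a = c then ?L (p+1) else 0)) = real p * ?L (p+1)"
      using e1 by (simp add: sum_distrib_left[symmetric])
    show ?thesis using e1 e2 by (simp add: sum.distrib T_def)
  qed
  finally show ?thesis by (simp add: phi_def algebra_simps)
qed

lemma T_runs: "set y \<subseteq> {..<q} \<Longrightarrow> T q y = sum_list (map phi (run_lengths y))"
proof (induction y rule: run_lengths.induct)
  case 1
  show ?case by (simp add: T_def fib_def ins_def)
next
  case (2 a xs)
  let ?p = "Suc (length (takeWhile (\<lambda>b. b = a) xs))"
  let ?z = "dropWhile (\<lambda>b. b = a) xs"
  have rb: "runblk ?p a ?z"
  proof
    show "1 \<le> ?p" by simp
    show "?z = [] \<or> hd ?z \<noteq> a" by (rule run_hd)
  qed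
  have e: "a # xs = runblk.yy ?p a ?z" using run_decomp runblk.yy_def[OF rb] by metis
  have "set ?z \<subseteq> {..<q}" using "2.prems" by (auto dest: set_dropWhileD)
  then have "T q ?z = sum_list (map phi (run_lengths ?z))" by (rule "2.IH")
  moreover have "a < q" using "2.prems" by simp
  moreover have "T q (a # xs) = phi ?p + T q ?z"
    unfolding e using T_step[OF rb \<open>a < q\<close>] .
  ultimately show ?case by simp
qed

lemma sum_runs: "sum_list (run_lengths y) = length y"
proof (induction y rule: run_lengths.induct)
  case (2 a xs)
  have "length xs = length (takeWhile (\<lambda>b. b = a) xs) + length (dropWhile (\<lambda>b. b = a) xs)"
    by (metis length_append takeWhile_dropWhile_id)
  then show ?case using 2 by simp
qed simp


lemma nths_del: "i < length x \<Longrightarrow> (\<forall>j<length x. j \<in> B) \<Longrightarrow> nths x (B - {i}) = take i x @ drop (Suc i) x"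
proof (induction x arbitrary: i B)
  case Nil then show ?case by simp
next
  case (Cons a x)
  show ?case
  proof (cases i)
    case 0
    have "nths x {j. Suc j \<in> B - {i}} = x" by (rule nths_all) (use Cons.prems 0 in auto)
    then show ?thesis using 0 by (simp add: nths_Cons)
  next
    case (Suc i')
    have e: "{j. Suc j \<in> B - {i}} = {j. Suc j \<in> B} - {i'}" using Suc by auto
    have "nths x ({j. Suc j \<in> B} - {i'}) = take i' x @ drop (Suc i') x"
      by (rule Cons.IH) (use Cons.prems Suc in auto)
    moreover have "nths (a#x) (B - {i}) = [a] @ nths x ({j. Suc j \<in> B} - {i'})"
      unfolding nths_Cons e using Cons.prems Suc by simp
    ultimately show ?thesis using Suc by simp
  qed
qed

definition del :: "nat \<Rightarrow> 'a list \<Rightarrow> 'a list" where "del i x = take i x @ drop (Suc i) x"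

lemma omega_del:
  assumes "length x = Suc (length y)"
  shows "omega y x = card {i. i < length x \<and> del i x = y}"
proof -
  let ?n = "length x"
  let ?A = "{i. i < ?n \<and> del i x = y}"
  let ?O = "{I. I \<subseteq> {..<?n} \<and> card I = length y \<and> nths x I = y}"
  have "?O = (\<lambda>i. {..<?n} - {i}) ` ?A"
  proof (intro set_eqI iffI)
    fix I assume I: "I \<in> ?O"
    then have sub: "I \<subseteq> {..<?n}" and cI: "card I = length y" and nI: "nths x I = y" by auto
    have "card ({..<?n} - I) = 1" using sub cI assms by (simp add: card_Diff_subset finite_subset)
    then obtain i where i: "{..<?n} - I = {i}" by (auto simp: card_1_singleton_iff)
    then have iI: "i < ?n" "I = {..<?n} - {i}" using sub by auto
    then have "del i x = y" using nI nths_del[of i x "{..<?n}"] by (simp add: del_def)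
    then show "I \<in> (\<lambda>i. {..<?n} - {i}) ` ?A" using iI by blast
  next
    fix I assume "I \<in> (\<lambda>i. {..<?n} - {i}) ` ?A"
    then obtain i where i: "i < ?n" "del i x = y" "I = {..<?n} - {i}" by blast
    have "nths x I = y" using i nths_del[of i x "{..<?n}"] by (simp add: del_def)
    moreover have "card I = length y" using i assms by simp
    ultimately show "I \<in> ?O" using i by auto
  qed
  moreover have "inj_on (\<lambda>i. {..<?n} - {i}) ?A"
    by (auto simp: inj_on_def)
  ultimately show ?thesis by (simp add: omega_def card_image)
qed

lemma mset_ins: "i \<le> length y \<Longrightarrow> mset (ins i a y) = add_mset a (mset y)"
proof -
  assume "i \<le> length y"
  have "mset y = mset (take i y @ drop i y)" by simp
  then show ?thesis unfolding ins_def by (simp only: mset_append) simp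
qed

lemma del_ins_iff:
  assumes "length x = Suc (length y)" "i < length x"
  shows "del i x = y \<longleftrightarrow> ins i (x ! i) y = x"
proof
  assume "del i x = y"
  then show "ins i (x ! i) y = x" using assms
    by (auto simp: del_def ins_def min_def id_take_nth_drop[symmetric])
next
  assume h: "ins i (x ! i) y = x"
  have "del i (ins i (x ! i) y) = y" using assms by (simp add: del_def ins_def min_def)
  then show "del i x = y" using h by simp
qed

lemma ins_nth: "i \<le> length y \<Longrightarrow> ins i a y ! i = a"
  by (simp add: nth_ins)

definition DD :: "nat \<Rightarrow> nat \<Rightarrow> (nat \<times> nat) set" where "DD q m = {..m} \<times> {..<q}"

definition fiber :: "nat \<Rightarrow> nat list \<Rightarrow> nat list \<Rightarrow> (nat \<times> nat) set" where
  "fiber q y x = {d \<in> DD q (length y). ins (fst d) (snd d) y = x}"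

lemma omega_fiber:
  assumes "x \<in> seqs q (Suc (length y))"
  shows "omega y x = card (fiber q y x)"
proof -
  have lx: "length x = Suc (length y)" and sx: "set x \<subseteq> {..<q}" using assms by (auto simp: seqs_def)
  have "fiber q y x = (\<lambda>i. (i, x ! i)) ` {i. i < length x \<and> del i x = y}"
  proof (intro set_eqI iffI)
    fix d assume d: "d \<in> fiber q y x"
    obtain i a where da: "d = (i, a)" by fastforce
    have il: "i \<le> length y" and e: "ins i a y = x" using d da by (auto simp: fiber_def DD_def)
    have "x ! i = a" by (metis e ins_nth[OF il])
    moreover have "i < length x" using il lx by simp
    moreover have "del i x = y" using del_ins_iff[OF lx] e calculation by simp
    ultimately show "d \<in> (\<lambda>i. (i, x ! i)) ` {i. i < length x \<and> del i x = y}" using da by auto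
  next
    fix d assume "d \<in> (\<lambda>i. (i, x ! i)) ` {i. i < length x \<and> del i x = y}"
    then obtain i where i: "d = (i, x ! i)" "i < length x" "del i x = y" by blast
    have "x ! i < q" using sx i(2) nth_mem by blast
    then show "d \<in> fiber q y x" using i del_ins_iff[OF lx] lx by (auto simp: fiber_def DD_def)
  qed
  moreover have "inj_on (\<lambda>i. (i, x ! i)) {i. i < length x \<and> del i x = y}" by (auto simp: inj_on_def)
  ultimately show ?thesis using omega_del[OF lx] by (simp add: card_image)
qed

lemma finite_seqs: "finite (seqs q n)"
proof -
  have "seqs q n = {xs. set xs \<subseteq> {..<q} \<and> length xs = n}" by (auto simp: seqs_def)
  then show ?thesis using finite_lists_length_eq[of "{..<q}" n] by simp
qed

lemma ins_seqs: "y \<in> seqs q m \<Longrightarrow> d \<in> DD q m \<Longrightarrow> ins (fst d) (snd d) y \<in> seqs q (Suc m)"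
  by (auto simp: seqs_def DD_def ins_def dest: in_set_takeD in_set_dropD)

lemma sum_fiber:
  fixes F :: "nat list \<Rightarrow> real"
  assumes "y \<in> seqs q m"
  shows "(\<Sum>x\<in>seqs q (Suc m). F x * real (card (fiber q y x))) = (\<Sum>d\<in>DD q m. F (ins (fst d) (snd d) y))"
proof -
  let ?phi = "\<lambda>d. ins (fst d) (snd d) y"
  have lm: "length y = m" using assms by (simp add: seqs_def)
  have fD: "finite (DD q m)" by (simp add: DD_def)
  have "(\<Sum>d\<in>DD q m. F (?phi d)) = (\<Sum>x\<in>?phi ` DD q m. \<Sum>d\<in>{d\<in>DD q m. ?phi d = x}. F (?phi d))"
    by (rule sum.image_gen[OF fD])
  also have "\<dots> = (\<Sum>x\<in>?phi ` DD q m. F x * real (card (fiber q y x)))"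
    by (rule sum.cong) (auto simp: fiber_def lm)
  also have "\<dots> = (\<Sum>x\<in>seqs q (Suc m). F x * real (card (fiber q y x)))"
  proof (rule sum.mono_neutral_left)
    show "finite (seqs q (Suc m))" by (rule finite_seqs)
    show "?phi ` DD q m \<subseteq> seqs q (Suc m)" using ins_seqs[OF assms] by auto
    show "\<forall>x\<in>seqs q (Suc m) - ?phi ` DD q m. F x * real (card (fiber q y x)) = 0"
    proof
      fix x assume "x \<in> seqs q (Suc m) - ?phi ` DD q m"
      then have "fiber q y x = {}" unfolding fiber_def lm by (auto intro: rev_image_eqI)
      then show "F x * real (card (fiber q y x)) = 0" by simp
    qed
  qed
  finally show ?thesis by simp
qed

lemma fiber_ins:
  assumes "y \<in> seqs q m" "(i, a) \<in> DD q m"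
  shows "card (fiber q y (ins i a y)) = fib y a i"
proof -
  have lm: "length y = m" using assms by (simp add: seqs_def)
  have "fiber q y (ins i a y) = (\<lambda>j. (j, a)) ` {j. j \<le> length y \<and> ins j a y = ins i a y}"
  proof (intro set_eqI iffI)
    fix d assume d: "d \<in> fiber q y (ins i a y)"
    obtain j b where db: "d = (j, b)" by fastforce
    have jl: "j \<le> length y" and e: "ins j b y = ins i a y" using d db lm by (auto simp: fiber_def DD_def)
    have "add_mset b (mset y) = add_mset a (mset y)"
      using arg_cong[OF e, of mset] mset_ins[OF jl] mset_ins[of i y a] assms lm by (simp add: DD_def)
    then have "b = a" by simp
    then show "d \<in> (\<lambda>j. (j, a)) ` {j. j \<le> length y \<and> ins j a y = ins i a y}" using db jl e by auto
  next
    fix d assume "d \<in> (\<lambda>j. (j, a)) ` {j. j \<le> length y \<and> ins j a y = ins i a y}"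
    then show "d \<in> fiber q y (ins i a y)" using assms lm by (auto simp: fiber_def DD_def)
  qed
  moreover have "inj_on (\<lambda>j. (j, a)) {j. j \<le> length y \<and> ins j a y = ins i a y}" by (auto simp: inj_on_def)
  ultimately show ?thesis by (simp add: card_image fib_def)
qed

lemma fib_pos: "i \<le> length y \<Longrightarrow> 1 \<le> fib y a i"
proof -
  assume "i \<le> length y"
  then have "i \<in> {j. j \<le> length y \<and> ins j a y = ins i a y}" by simp
  moreover have "finite {j. j \<le> length y \<and> ins j a y = ins i a y}" by simp
  ultimately show ?thesis unfolding fib_def by (metis One_nat_def Suc_leI card_gt_0_iff empty_iff)
qed


lemma card_DD: "card (DD q m) = Suc m * q" by (simp add: DD_def card_cartesian_product)

lemma sum_DD_T:
  assumes "length y = m"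
  shows "(\<Sum>d\<in>DD q m. log 2 (real (fib y (snd d) (fst d)))) = T q y"
proof -
  have "(\<Sum>d\<in>DD q m. log 2 (real (fib y (snd d) (fst d)))) = (\<Sum>i\<le>m. \<Sum>a<q. log 2 (real (fib y a i)))"
    unfolding DD_def by (simp add: sum.cartesian_product split_def)
  also have "\<dots> = T q y" unfolding T_def using assms by (simp add: sum.swap[of _ "{..m}"])
  finally show ?thesis .
qed

lemma H_formula:
  assumes y: "y \<in> seqs q m" and q: "1 \<le> q"
  shows "H_in_del q (Suc m) y = log 2 (real (Suc m) * real q) - T q y / (real (Suc m) * real q)"
proof -
  define N where "N = real (Suc m) * real q"
  have Npos: "N > 0" using q by (simp add: N_def)
  have lm: "length y = m" using y by (simp add: seqs_def)
  have om: "omega y x = card (fiber q y x)" if "x \<in> seqs q (Suc m)" for x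
    using omega_fiber[of x q y] that lm by simp
  have S1: "(\<Sum>x\<in>seqs q (Suc m). real (omega y x)) = N"
  proof -
    have "(\<Sum>x\<in>seqs q (Suc m). real (omega y x)) = (\<Sum>x\<in>seqs q (Suc m). 1 * real (card (fiber q y x)))"
      by (rule sum.cong) (simp_all add: om)
    also have "\<dots> = (\<Sum>d\<in>DD q m. 1)" by (rule sum_fiber[OF y])
    finally show ?thesis by (simp add: card_DD N_def algebra_simps)
  qed
  have den: "(\<Sum>x'\<in>seqs q (Suc m). real (omega y x') / real (Suc m)) = real q"
    using S1 by (simp add: sum_divide_distrib[symmetric] N_def field_simps)
  have post: "posterior q (Suc m) y x = real (omega y x) / N" for x
    unfolding posterior_def den N_def by simp
  have trm: "(let p = posterior q (Suc m) y x in if p = 0 then 0 else p * log 2 p)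
      = (log 2 (real (card (fiber q y x)) / N) / N) * real (card (fiber q y x))"
    if "x \<in> seqs q (Suc m)" for x
    using Npos by (simp add: post om[OF that] Let_def)
  have "(\<Sum>x\<in>seqs q (Suc m). let p = posterior q (Suc m) y x in if p = 0 then 0 else p * log 2 p)
      = (\<Sum>x\<in>seqs q (Suc m). (log 2 (real (card (fiber q y x)) / N) / N) * real (card (fiber q y x)))"
    by (rule sum.cong) (simp_all add: trm)
  also have "\<dots> = (\<Sum>d\<in>DD q m. log 2 (real (card (fiber q y (ins (fst d) (snd d) y))) / N) / N)"
    by (rule sum_fiber[OF y])
  also have "\<dots> = (\<Sum>d\<in>DD q m. (log 2 (real (fib y (snd d) (fst d))) - log 2 N) / N)"
  proof (rule sum.cong)
    fix d assume d: "d \<in> DD q m"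
    obtain i a where da: "d = (i, a)" by fastforce
    have c: "card (fiber q y (ins i a y)) = fib y a i" using fiber_ins[OF y] d da by simp
    have "1 \<le> fib y a i" using fib_pos[of i y a] d da lm by (simp add: DD_def)
    then show "log 2 (real (card (fiber q y (ins (fst d) (snd d) y))) / N) / N = (log 2 (real (fib y (snd d) (fst d))) - log 2 N) / N"
      using c da Npos by (simp add: log_divide)
  qed simp
  also have "\<dots> = T q y / N - log 2 N"
  proof -
    have cN: "real (card (DD q m)) = N" by (simp add: card_DD N_def algebra_simps)
    show ?thesis
      using Npos by (simp add: sum_divide_distrib[symmetric] sum_subtractf sum_DD_T[OF lm] cN diff_divide_distrib)
  qed
  finally show ?thesis unfolding H_in_del_def N_def by simp
qed


lemma ln_strict: "0 < (x::real) \<Longrightarrow> x \<noteq> 1 \<Longrightarrow> ln x < x - 1"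
  using ln_le_minus_one[of x] ln_eq_minus_one[of x] by linarith

lemma second_diff_ln:
  fixes s :: real assumes s: "2 \<le> s"
  shows "2 * (s * ln s) < (s+1) * ln (s+1) + (s-1) * ln (s-1)"
proof -
  have "ln (s / (s+1)) < s / (s+1) - 1" using s by (intro ln_strict) auto
  moreover have "ln (s / (s+1)) = ln s - ln (s+1)" using s by (simp add: ln_div)
  moreover have "s / (s+1) - 1 = - 1 / (s+1)" using s by (simp add: field_simps)
  ultimately have "1 / (s+1) < ln (s+1) - ln s" by simp
  then have A: "1 < (s+1) * (ln (s+1) - ln s)" using s by (simp add: field_simps)
  have "ln s - ln (s-1) \<le> (s - (s-1)) / (s-1)" using s by (intro ln_diff_le) auto
  then have B: "(s-1) * (ln s - ln (s-1)) \<le> 1" using s by (simp add: field_simps)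
  from A B show ?thesis by (simp add: algebra_simps)
qed

definition Dphi :: "nat \<Rightarrow> real" where "Dphi k = phi (Suc k) - phi k"

lemma Dphi_Suc: "Dphi k < Dphi (Suc k)"
proof -
  define s where "s = real k + 2"
  have s: "2 \<le> s" by (simp add: s_def)
  have "2 * (s * ln s) < (s+1) * ln (s+1) + (s-1) * ln (s-1)" by (rule second_diff_ln[OF s])
  then have pos: "0 < ((s+1) * ln (s+1) + (s-1) * ln (s-1) - 2 * (s * ln s)) / ln 2"
    by simp
  have "phi k = (s-1) * ln (s-1) / ln 2" "phi (Suc k) = s * ln s / ln 2"
    "phi (Suc (Suc k)) = (s+1) * ln (s+1) / ln 2"
    by (simp_all add: phi_def s_def log_def algebra_simps)
  then have "Dphi (Suc k) - Dphi k = ((s+1) * ln (s+1) + (s-1) * ln (s-1) - 2 * (s * ln s)) / ln 2"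
    unfolding Dphi_def by (simp add: diff_divide_distrib add_divide_distrib)
  then show ?thesis using pos by linarith
qed

lemma Dphi_mono: "a < b \<Longrightarrow> Dphi a < Dphi b"
  using lift_Suc_mono_less[of Dphi, OF Dphi_Suc] by blast

lemma phi_diff_sum: "a \<le> b \<Longrightarrow> phi b - phi a = (\<Sum>t = a..<b. Dphi t)"
  unfolding Dphi_def by (simp add: sum_Suc_diff')

lemma support_line: "phi f + (real k - real f) * Dphi f \<le> phi k"
proof (cases "f \<le> k")
  case True
  have "(\<Sum>t = f..<k. Dphi f) \<le> (\<Sum>t = f..<k. Dphi t)"
    by (rule sum_mono) (auto intro: less_imp_le Dphi_mono simp: order.order_iff_strict)
  then show ?thesis using phi_diff_sum[OF True] True by (simp add: of_nat_diff algebra_simps)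
next
  case False
  then have fk: "k \<le> f" by simp
  have "(\<Sum>t = k..<f. Dphi t) \<le> (\<Sum>t = k..<f. Dphi f)"
    by (rule sum_mono) (metis Dphi_mono atLeastLessThan_iff less_imp_le)
  then show ?thesis using phi_diff_sum[OF fk] fk by (simp add: of_nat_diff algebra_simps)
qed

lemma support_line_strict:
  assumes "k \<noteq> f" "k \<noteq> Suc f"
  shows "phi f + (real k - real f) * Dphi f < phi k"
proof (cases "f \<le> k")
  case True
  then have k2: "Suc f < k" using assms by simp
  have "(\<Sum>t = f..<k. Dphi f) < (\<Sum>t = f..<k. Dphi t)"
  proof (rule sum_strict_mono_ex1)
    show "finite {f..<k}" by simp
    show "\<forall>t\<in>{f..<k}. Dphi f \<le> Dphi t" by (auto intro: less_imp_le Dphi_mono simp: order.order_iff_strict)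
    show "\<exists>t\<in>{f..<k}. Dphi f < Dphi t" using k2 by (intro bexI[of _ "Suc f"]) (auto intro: Dphi_mono)
  qed
  then show ?thesis using phi_diff_sum[OF True] True by (simp add: of_nat_diff algebra_simps)
next
  case False
  then have fk: "k < f" by simp
  have "(\<Sum>t = k..<f. Dphi t) < (\<Sum>t = k..<f. Dphi f)"
  proof (rule sum_strict_mono_ex1)
    show "finite {k..<f}" by simp
    show "\<forall>t\<in>{k..<f}. Dphi t \<le> Dphi f" by (metis Dphi_mono atLeastLessThan_iff less_imp_le)
    show "\<exists>t\<in>{k..<f}. Dphi t < Dphi f" using fk by (intro bexI[of _ k]) (auto intro: Dphi_mono)
  qed
  then show ?thesis using phi_diff_sum[of k f] fk by (simp add: of_nat_diff algebra_simps)
qed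

lemma sum_list_lin: "sum_list (map (\<lambda>k. a + (real k - b) * c) L) = real (length L) * a + (real (sum_list L) - real (length L) * b) * c"
  by (induction L) (simp_all add: algebra_simps)

lemma sum_list_mono_strict:
  fixes g h :: "nat \<Rightarrow> real"
  assumes "\<forall>x\<in>set L. g x \<le> h x" "\<exists>x\<in>set L. g x < h x"
  shows "sum_list (map g L) < sum_list (map h L)"
  using assms
proof (induction L)
  case Nil then show ?case by simp
next
  case (Cons a L)
  show ?case
  proof (cases "g a < h a")
    case True
    have "sum_list (map g L) \<le> sum_list (map h L)" using Cons.prems by (intro sum_list_mono) auto
    then show ?thesis using True by simp
  next
    case False
    then have "sum_list (map g L) < sum_list (map h L)" using Cons by auto
    then show ?thesis using Cons.prems by simp
  qed
qed

lemma opt_bound: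
  assumes "length L = R" "sum_list L = m" "1 \<le> R"
  shows "real (R - m mod R) * phi (m div R) + real (m mod R) * phi (Suc (m div R)) \<le> sum_list (map phi L)"
    and "sum_list (map phi L) = real (R - m mod R) * phi (m div R) + real (m mod R) * phi (Suc (m div R))
         \<Longrightarrow> set L \<subseteq> {m div R, Suc (m div R)}"
proof -
  let ?f = "m div R" and ?r = "m mod R"
  let ?g = "\<lambda>k. phi ?f + (real k - real ?f) * Dphi ?f"
  have mr: "m = R * ?f + ?r" by simp
  have rR: "?r \<le> R" using assms(3) by (simp add: order.strict_implies_order)
  have lin: "sum_list (map ?g L) = real (R - ?r) * phi ?f + real ?r * phi (Suc ?f)"
  proof -
    have "sum_list (map ?g L) = real R * phi ?f + (real m - real R * real ?f) * Dphi ?f"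
      using sum_list_lin[of "phi ?f" "real ?f" "Dphi ?f" L] assms by simp
    also have "real m - real R * real ?f = real ?r" using mr by (metis add_diff_cancel_left' of_nat_add of_nat_mult)
    finally show ?thesis using rR by (simp add: Dphi_def of_nat_diff algebra_simps)
  qed
  have le: "sum_list (map ?g L) \<le> sum_list (map phi L)"
    by (rule sum_list_mono) (rule support_line)
  then show "real (R - ?r) * phi ?f + real ?r * phi (Suc ?f) \<le> sum_list (map phi L)" using lin by simp
  show "set L \<subseteq> {?f, Suc ?f}" if eq: "sum_list (map phi L) = real (R - ?r) * phi ?f + real ?r * phi (Suc ?f)"
  proof (rule ccontr)
    assume "\<not> set L \<subseteq> {?f, Suc ?f}"
    then obtain k where "k \<in> set L" "k \<noteq> ?f" "k \<noteq> Suc ?f" by blast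
    then have "sum_list (map ?g L) < sum_list (map phi L)"
      by (intro sum_list_mono_strict) (auto intro: support_line support_line_strict)
    then show False using lin eq by simp
  qed
qed

lemma count_two: "set L \<subseteq> {f, Suc f} \<Longrightarrow> count (mset L) f + count (mset L) (Suc f) = length L"
  by (induction L) auto

lemma sum_two: "set L \<subseteq> {f, Suc f} \<Longrightarrow> sum_list L = length L * f + count (mset L) (Suc f)"
  by (induction L) auto

lemma mset_two:
  assumes "set L \<subseteq> {f, Suc f}" "length L = R" "sum_list L = R * f + r"
  shows "mset L = replicate_mset r (Suc f) + replicate_mset (R - r) f"
proof (rule multiset_eqI)
  fix x
  have c1: "count (mset L) (Suc f) = r" using sum_two[OF assms(1)] assms by simp
  have c2: "count (mset L) f = R - r" using count_two[OF assms(1)] assms(2) c1 by simp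
  show "count (mset L) x = count (replicate_mset r (Suc f) + replicate_mset (R - r) f) x"
  proof (cases "x = f \<or> x = Suc f")
    case True then show ?thesis using c1 c2 by auto
  next
    case False
    then have "x \<notin> set L" using assms(1) by auto
    then show ?thesis using False by (simp add: count_eq_zero_iff)
  qed
qed


lemma run_lengths_block:
  assumes "1 \<le> p" "z = [] \<or> hd z \<noteq> c"
  shows "run_lengths (replicate p c @ z) = p # run_lengths z"
proof -
  obtain p' where p': "p = Suc p'" using assms(1) by (cases p) auto
  have tw: "takeWhile (\<lambda>b. b = c) z = []" and dw: "dropWhile (\<lambda>b. b = c) z = z"
    using assms(2) by (cases z; auto)+
  have "takeWhile (\<lambda>b. b = c) (replicate p' c @ z) = replicate p' c"
    using tw by (subst takeWhile_append2) auto
  moreover have "dropWhile (\<lambda>b. b = c) (replicate p' c @ z) = z"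
    using dw by (subst dropWhile_append2) auto
  ultimately show ?thesis using p' by simp
qed

fun build :: "nat list \<Rightarrow> nat \<Rightarrow> nat list" where
  "build [] b = []"
| "build (p # ps) b = replicate p b @ build ps (1 - b)"

lemma build_props:
  assumes "\<forall>p\<in>set ps. 1 \<le> p" "b \<le> 1"
  shows "run_lengths (build ps b) = ps \<and> set (build ps b) \<subseteq> {0, 1} \<and> length (build ps b) = sum_list ps
    \<and> (build ps b = [] \<or> hd (build ps b) = b)"
  using assms
proof (induction ps arbitrary: b)
  case Nil then show ?case by simp
next
  case (Cons p ps)
  have IH: "run_lengths (build ps (1-b)) = ps \<and> set (build ps (1-b)) \<subseteq> {0, 1} \<and> length (build ps (1-b)) = sum_list ps
    \<and> (build ps (1-b) = [] \<or> hd (build ps (1-b)) = 1 - b)" using Cons by simp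
  have p: "1 \<le> p" using Cons.prems by simp
  have "1 - b \<noteq> b" using Cons.prems(2) by (cases b) auto
  then have "build ps (1-b) = [] \<or> hd (build ps (1-b)) \<noteq> b" using IH by auto
  then have "run_lengths (build (p # ps) b) = p # run_lengths (build ps (1-b))"
    using run_lengths_block[OF p] by simp
  then have "run_lengths (build (p # ps) b) = p # ps" using IH by simp
  moreover have "set (build (p # ps) b) \<subseteq> {0, 1}" using IH Cons.prems p by (auto split: if_splits)
  moreover have "build (p # ps) b = [] \<or> hd (build (p # ps) b) = b" using p by (cases p) auto
  ultimately show ?case using IH by simp
qed


theorem lemma7:
  fixes q n m R r :: nat
  assumes "q \<ge> 2" and "n \<ge> 2" and "m = n - 1"
    and "1 \<le> R" and "R \<le> m" and "r = m mod R"
  shows "Max (H_in_del q n ` seqs_runs q R m) =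
           log 2 (real n * real q)
           - real r / (real n * real q) * (real_of_int \<lceil>real m / real R\<rceil> + 1)
               * log 2 (real_of_int \<lceil>real m / real R\<rceil> + 1)
           - real (R - r) / (real n * real q) * (real_of_int \<lfloor>real m / real R\<rfloor> + 1)
               * log 2 (real_of_int \<lfloor>real m / real R\<rfloor> + 1)
         \<and> (\<forall>y\<in>seqs_runs q R m.
           H_in_del q n y = Max (H_in_del q n ` seqs_runs q R m) \<longrightarrow> balanced R m y)"
proof -
  have n: "n = Suc m" using assms(2,3) by simp
  define f where "f = m div R"
  have rR: "r < R" using assms(4,6) by simp
  have mfr: "m = R * f + r" using assms(6) by (simp add: f_def)
  have f1: "1 \<le> f" using assms(4,5) by (simp add: f_def div_greater_zero_iff Suc_le_eq)
  define N where "N = real n * real q"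
  have Npos: "0 < N" using assms(1,2) by (simp add: N_def)
  define B where "B = real (R - r) * phi f + real r * phi (Suc f)"
  let ?S = "seqs_runs q R m"
  have Hy: "H_in_del q n y = log 2 N - sum_list (map phi (run_lengths y)) / N" if "y \<in> ?S" for y
  proof -
    have ys: "y \<in> seqs q m" using that by (simp add: seqs_runs_def)
    have "set y \<subseteq> {..<q}" using ys by (simp add: seqs_def)
    then have "T q y = sum_list (map phi (run_lengths y))" by (rule T_runs)
    then show ?thesis using H_formula[OF ys] assms(1) n by (simp add: N_def)
  qed
  have runs: "length (run_lengths y) = R \<and> sum_list (run_lengths y) = m" if "y \<in> ?S" for y
    using that by (simp add: seqs_runs_def num_runs_def sum_runs seqs_def)
  have upper: "H_in_del q n y \<le> log 2 N - B / N" if "y \<in> ?S" for y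
  proof -
    have "B \<le> sum_list (map phi (run_lengths y))"
      unfolding B_def f_def assms(6) using opt_bound(1)[of "run_lengths y" R m] runs[OF that] assms(4) by simp
    then have "B / N \<le> sum_list (map phi (run_lengths y)) / N" using Npos by (simp add: divide_right_mono)
    then show ?thesis using Hy[OF that] by simp
  qed
  define L0 where "L0 = replicate r (Suc f) @ replicate (R - r) f"
  define y0 where "y0 = build L0 0"
  have L0pos: "\<forall>p\<in>set L0. 1 \<le> p" using f1 by (auto simp: L0_def)
  have bp: "run_lengths y0 = L0 \<and> set y0 \<subseteq> {0, 1} \<and> length y0 = sum_list L0"
    using build_props[OF L0pos, of 0] by (simp add: y0_def)
  have sL0: "sum_list L0 = m" using rR mfr by (simp add: L0_def sum_list_replicate algebra_simps)
  have y0S: "y0 \<in> ?S"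
  proof -
    have "set y0 \<subseteq> {..<q}" using bp assms(1) by auto
    moreover have "length y0 = m" using bp sL0 by simp
    moreover have "num_runs y0 = R" using bp rR by (simp add: num_runs_def L0_def)
    ultimately show ?thesis by (simp add: seqs_runs_def seqs_def)
  qed
  have "sum_list (map phi L0) = B" by (simp add: L0_def B_def sum_list_replicate algebra_simps)
  then have Hy0: "H_in_del q n y0 = log 2 N - B / N" using Hy[OF y0S] bp by simp
  have finS: "finite ?S"
    by (rule finite_subset[OF _ finite_seqs[of q m]]) (auto simp: seqs_runs_def)
  have MaxE: "Max (H_in_del q n ` ?S) = log 2 N - B / N"
  proof (rule Max_eqI)
    show "finite (H_in_del q n ` ?S)" using finS by simp
    show "x \<le> log 2 N - B / N" if "x \<in> H_in_del q n ` ?S" for x using that upper by auto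
    show "log 2 N - B / N \<in> H_in_del q n ` ?S" using Hy0 y0S by (metis image_eqI)
  qed
  have fl: "\<lfloor>real m / real R\<rfloor> = int f" unfolding f_def by (rule floor_divide_of_nat_eq)
  have third: "real (R - r) / (real n * real q) * (real_of_int \<lfloor>real m / real R\<rfloor> + 1)
               * log 2 (real_of_int \<lfloor>real m / real R\<rfloor> + 1) = real (R - r) * phi f / N"
    by (simp add: fl phi_def N_def add.commute)
  have second: "real r / (real n * real q) * (real_of_int \<lceil>real m / real R\<rceil> + 1)
               * log 2 (real_of_int \<lceil>real m / real R\<rceil> + 1) = real r * phi (Suc f) / N"
  proof (cases "r = 0")
    case True then show ?thesis by simp
  next
    case False
    have Rpos: "0 < real R" using assms(4) by simp
    have "real f < real m / real R" using False mfr Rpos by (simp add: field_simps)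
    moreover have "real m / real R \<le> real f + 1" using rR mfr Rpos by (simp add: field_simps)
    ultimately have "\<lceil>real m / real R\<rceil> = int f + 1" by (intro ceiling_unique) auto
    then show ?thesis by (simp add: phi_def N_def add.commute)
  qed
  have part1: "Max (H_in_del q n ` ?S) =
           log 2 (real n * real q)
           - real r / (real n * real q) * (real_of_int \<lceil>real m / real R\<rceil> + 1)
               * log 2 (real_of_int \<lceil>real m / real R\<rceil> + 1)
           - real (R - r) / (real n * real q) * (real_of_int \<lfloor>real m / real R\<rfloor> + 1)
               * log 2 (real_of_int \<lfloor>real m / real R\<rfloor> + 1)"
    unfolding MaxE second third B_def by (simp add: N_def add_divide_distrib diff_divide_distrib)
  have part2: "balanced R m y" if y: "y \<in> ?S" "H_in_del q n y = Max (H_in_del q n ` ?S)" for y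
  proof -
    have "sum_list (map phi (run_lengths y)) / N = B / N" using y Hy[OF y(1)] MaxE by simp
    then have eq: "sum_list (map phi (run_lengths y)) = B" using Npos by simp
    have st: "set (run_lengths y) \<subseteq> {f, Suc f}"
      using opt_bound(2)[of "run_lengths y" R m] runs[OF y(1)] assms(4) eq
      unfolding B_def f_def assms(6) by simp
    have ms: "mset (run_lengths y) = replicate_mset r (Suc f) + replicate_mset (R - r) f"
      using mset_two[OF st] runs[OF y(1)] mfr by simp
    have "replicate_mset r (nat \<lceil>real m / real R\<rceil>) = replicate_mset r (Suc f)"
    proof (cases "r = 0")
      case True then show ?thesis by simp
    next
      case False
      have Rpos: "0 < real R" using assms(4) by simp
      have "real f < real m / real R" using False mfr Rpos by (simp add: field_simps)
      moreover have "real m / real R \<le> real f + 1" using rR mfr Rpos by (simp add: field_simps)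
      ultimately have "\<lceil>real m / real R\<rceil> = int f + 1" by (intro ceiling_unique) auto
      then show ?thesis by (simp add: nat_add_distrib)
    qed
    then show ?thesis unfolding balanced_def using ms fl assms(6) by simp
  qed
  show ?thesis using part1 part2 by blast
qed

end
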